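(* Let $R$ be an integral domain with units $q,\lambda,x,q_0$ and elements $A,q_1$, $\delta=q-q^{-1}$, $x\delta=\delta-\lambda+\lambda^{-1}$, and let $\mathrm{BB}_2$ be as in the context. If $e_1\in\mathrm{BB}_2$ has vanishing annihilator ideal in $R$ (i.e. $re_1=0$ with $r\in R$ implies $r=0$), then $A(1-q_0\lambda)=q_1x$. If in addition $e_1$ and $Ye_1$ are $R$-linearly independent, then $q_0-q_0^{-1}=-\delta$.
   Context: $\mathrm{BB}_2=\mathrm{BB}_2(R)$ is the unital associative $R$-algebra generated by invertible $Y,X_1$ and an element $e_1$ subject to: $X_1e_1=e_1X_1=\lambda e_1$, $e_1^2=xe_1$, $X_1^{-1}=X_1-\delta+\delta e_1$, $X_1^2=1+\delta X_1-\delta\lambda e_1$, $X_1YX_1Y=YX_1YX_1$, $Y^2=q_1Y+q_0$, $YX_1Ye_1=e_1$, $e_1Ye_1=Ae_1$. (No relation between $A$, $q_0$ and the other parameters is assumed here.) *)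

theory Defs
  imports Main
begin

text \<open>A unital associative R-algebra is modelled as a ring 'a together with a
  ring homomorphism phi : R -> 'a whose image is central; r . a := phi r * a.\<close>
definition alg_str :: "('r::comm_ring_1 \<Rightarrow> 'a::ring_1) \<Rightarrow> bool" where
  "alg_str phi \<longleftrightarrow> phi 1 = 1 \<and> (\<forall>a b. phi (a + b) = phi a + phi b)
     \<and> (\<forall>a b. phi (a * b) = phi a * phi b) \<and> (\<forall>r z. phi r * z = z * phi r)"

definition BB2_rels :: "('r::comm_ring_1 \<Rightarrow> 'a::ring_1) \<Rightarrow> 'r \<Rightarrow> 'r \<Rightarrow> 'r \<Rightarrow> 'r \<Rightarrow> 'r \<Rightarrow> 'r
    \<Rightarrow> 'a \<Rightarrow> 'a \<Rightarrow> 'a \<Rightarrow> bool" where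
  "BB2_rels phi lam x delta q0 q1 A Y X1 e1 \<longleftrightarrow>
     (\<exists>Yi. Y * Yi = 1 \<and> Yi * Y = 1) \<and>
     (\<exists>X1i. X1 * X1i = 1 \<and> X1i * X1 = 1 \<and> X1i = X1 - phi delta + phi delta * e1) \<and>
     X1 * e1 = phi lam * e1 \<and> e1 * X1 = phi lam * e1 \<and>
     e1 * e1 = phi x * e1 \<and>
     X1 * X1 = 1 + phi delta * X1 - phi (delta * lam) * e1 \<and>
     X1 * Y * X1 * Y = Y * X1 * Y * X1 \<and>
     Y * Y = phi q1 * Y + phi q0 \<and>
     Y * X1 * Y * e1 = e1 \<and>
     e1 * Y * e1 = phi A * e1"

end

theory Submission
  imports Defs
begin

theorem lemma3:
  fixes q qi lam lami x q0 q0i A q1 delta :: "'r::idom"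
    and phi :: "'r \<Rightarrow> 'a::ring_1"
    and Y X1 e1 :: 'a
  assumes "q * qi = 1" and "lam * lami = 1" and "x dvd 1" and "q0 * q0i = 1"
    and "delta = q - qi"
    and "x * delta = delta - lam + lami"
    and "alg_str phi"
    and "BB2_rels phi lam x delta q0 q1 A Y X1 e1"
    and "\<forall>r. phi r * e1 = 0 \<longrightarrow> r = 0"
  shows "A * (1 - q0 * lam) = q1 * x \<and>
    ((\<forall>r s. phi r * e1 + phi s * (Y * e1) = 0 \<longrightarrow> r = 0 \<and> s = 0)
       \<longrightarrow> q0 - q0i = - delta)"
proof -
  have p1: "phi 1 = 1" and padd: "\<And>a b. phi (a + b) = phi a + phi b"
    and pmul: "\<And>a b. phi (a * b) = phi a * phi b" and pc: "\<And>r z. phi r * z = z * phi r"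
    using assms(7) unfolding alg_str_def by blast+
  have ec: "\<And>c. e1 * phi c = phi c * e1" using pc by metis
  have xc: "\<And>c. X1 * phi c = phi c * X1" using pc by metis
  have p0: "phi 0 = 0" using padd[of 0 0] by simp
  have pneg: "\<And>a. phi (- a) = - phi a" using padd p0
    by (metis add_eq_0_iff2 add.right_inverse)
  have pdiff: "\<And>a b. phi (a - b) = phi a - phi b"
    by (metis diff_conv_add_uminus padd pneg)
  obtain X1i where X1i: "X1i * X1 = 1" "X1i = X1 - phi delta + phi delta * e1"
    using assms(8) unfolding BB2_rels_def by auto
  have X1e: "X1 * e1 = phi lam * e1" and e1X: "e1 * X1 = phi lam * e1"
    and ee: "e1 * e1 = phi x * e1" and YY: "Y * Y = phi q1 * Y + phi q0"
    and YXYe: "Y * X1 * Y * e1 = e1" and eYe: "e1 * Y * e1 = phi A * e1"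
    using assms(8) unfolding BB2_rels_def by auto
  have Yl: "(phi q0i * (Y - phi q1)) * Y = 1"
  proof -
    have "(phi q0i * (Y - phi q1)) * Y = phi q0i * (Y * Y - phi q1 * Y)"
      using pc[of q1 Y] by (simp add: algebra_simps)
    also have "\<dots> = phi q0i * phi q0" using YY by simp
    also have "\<dots> = 1" using assms(4) pmul p1 by (metis mult.commute)
    finally show ?thesis .
  qed
  have XYe: "X1 * (Y * e1) = phi (- q0i * q1) * e1 + phi q0i * (Y * e1)"
  proof -
    have "X1 * (Y * e1) = (phi q0i * (Y - phi q1)) * Y * (X1 * (Y * e1))"
      using Yl by simp
    also have "\<dots> = (phi q0i * (Y - phi q1)) * e1"
      using YXYe by (simp add: mult.assoc)
    also have "\<dots> = phi (- q0i * q1) * e1 + phi q0i * (Y * e1)"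
      by (simp add: algebra_simps pneg pmul)
    finally show ?thesis .
  qed
  have ann: "\<And>r. phi r * e1 = 0 \<Longrightarrow> r = 0" using assms(9) by auto
  have part1: "A * (1 - q0 * lam) = q1 * x"
  proof -
    have "e1 * (X1 * (Y * e1)) = phi (lam * A) * e1"
      by (metis eYe e1X mult.assoc pmul)
    moreover have "e1 * (X1 * (Y * e1)) = phi (q0i * (A - q1 * x)) * e1"
    proof -
      have "e1 * (X1 * (Y * e1)) = e1 * phi (- q0i * q1) * e1 + e1 * phi q0i * (Y * e1)"
        by (simp add: XYe algebra_simps)
      also have "\<dots> = phi (- q0i * q1) * (e1 * e1) + phi q0i * (e1 * Y * e1)"
        by (simp add: mult.assoc[symmetric] ec)
      also have "\<dots> = phi (- q0i * q1) * phi x * e1 + phi q0i * phi A * e1"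
        using ee eYe by (simp add: mult.assoc)
      also have "\<dots> = phi (- q0i * q1 * x + q0i * A) * e1"
        by (simp only: pmul padd distrib_right)
      also have "\<dots> = phi (q0i * (A - q1 * x)) * e1"
        by (simp add: algebra_simps)
      finally show ?thesis .
    qed
    ultimately have "phi (lam * A - q0i * (A - q1 * x)) * e1 = 0"
      by (simp add: pdiff left_diff_distrib)
    hence "lam * A - q0i * (A - q1 * x) = 0" by (rule ann)
    hence "q0 * (lam * A - q0i * (A - q1 * x)) = 0" by simp
    hence "q0 * lam * A - (q0 * q0i) * (A - q1 * x) = 0" by (simp add: algebra_simps)
    thus ?thesis using assms(4) by (simp add: algebra_simps)
  qed
  show ?thesis
  proof (intro conjI impI part1)
    assume ind: "\<forall>r s. phi r * e1 + phi s * (Y * e1) = 0 \<longrightarrow> r = 0 \<and> s = 0"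
    define N where "N = (\<lambda>r s. phi r * e1 + phi s * (Y * e1))"
    have Nsc: "\<And>c r s. phi c * N r s = N (c * r) (c * s)"
      by (simp add: N_def pmul algebra_simps)
    have XN: "\<And>r s. X1 * N r s = N (r * lam + s * (- q0i * q1)) (s * q0i)"
    proof -
      fix r s
      have "X1 * N r s = phi r * (X1 * e1) + phi s * (X1 * (Y * e1))"
        by (simp add: N_def distrib_left mult.assoc[symmetric] xc)
      also have "\<dots> = N (r * lam + s * (- q0i * q1)) (s * q0i)"
        by (simp only: X1e XYe N_def padd pmul distrib_left distrib_right mult.assoc add.assoc)
      finally show "X1 * N r s = N (r * lam + s * (- q0i * q1)) (s * q0i)" .
    qed
    have eN: "\<And>r s. e1 * N r s = N (r * x + s * A) 0"
    proof -
      fix r s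
      have "e1 * N r s = phi r * (e1 * e1) + phi s * (e1 * Y * e1)"
        by (simp add: N_def distrib_left mult.assoc[symmetric] ec)
      thus "e1 * N r s = N (r * x + s * A) 0"
        using ee eYe by (simp add: N_def padd pmul p0 distrib_right mult.assoc)
    qed
    have XYe': "X1 * (Y * e1) = N (- q0i * q1) q0i" using XYe by (simp add: N_def)
    define a where "a = - q0i * q1"
    define s where "s = q0i * q0i - delta * q0i"
    obtain r where Ye: "Y * e1 = N r s"
    proof -
      have "Y * e1 = X1i * (X1 * (Y * e1))" using X1i(1) by (simp add: mult.assoc[symmetric])
      also have "\<dots> = X1 * N a q0i - phi delta * N a q0i + phi delta * (e1 * N a q0i)"
        using XYe' X1i(2) unfolding a_def by (simp add: left_diff_distrib distrib_right mult.assoc)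
      also have "\<dots> = N (a * lam + q0i * (- q0i * q1)) (q0i * q0i) - N (delta * a) (delta * q0i)
          + N (delta * (a * x + q0i * A)) (delta * 0)"
        by (simp only: XN eN Nsc)
      also have "\<dots> = N ((a * lam + q0i * (- q0i * q1)) - delta * a + delta * (a * x + q0i * A)) s"
        unfolding N_def s_def by (simp add: padd pdiff p0 algebra_simps)
      finally show ?thesis using that by blast
    qed
    have "phi (- r) * e1 + phi (1 - s) * (Y * e1) = 0"
      using Ye by (simp add: N_def pneg pdiff p1 algebra_simps)
    hence "1 - s = 0" using ind by blast
    hence "q0 * (q0i * q0i - delta * q0i) = q0" by (simp add: s_def)
    hence "(q0 * q0i) * q0i - delta * (q0 * q0i) = q0" by (simp add: algebra_simps)
    hence "q0i - delta = q0" using assms(4) by simp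
    thus "q0 - q0i = - delta" by (simp add: algebra_simps)
  qed
qed

end
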